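(* Let $L\in\mathbf{LMO}(\Sigma)$ be a language recognized by some MON-1qfa with isolated cut-point. Then its syntactic monoid $M(L)$ is an $R$-trivial block group, i.e. $M(L)\in\mathbf{BG}\cap\mathbf{R}$.
   Context: A MON-1qfa over a finite alphabet $\Sigma$ is a tuple $A=\langle\Sigma\cup\{\#\},(O_c)_{c\in\Sigma\cup\{\#\}},\pi_0,F\rangle$, where $\pi_0\in\mathbb{C}^{1\times m}$ has norm $1$, each $O_c$ is an observable (Hermitian $m\times m$ matrix) with spectral decomposition $O_c=\sum_{r\in V(O_c)} r\,P_c(r)$ into orthogonal projectors, and $F\subseteq V(O_\#)$. For $x=x_1\cdots x_n$, with $\rho_0=\pi_0^\dagger\pi_0$ and $\rho_i=\sum_{r}P_{x_i}(r)\rho_{i-1}P_{x_i}(r)$, the acceptance probability is $p_A(x)=\sum_{r\in F}\mathrm{tr}(P_\#(r)\rho_n)$. $A$ recognizes $L$ with isolated cut-point $\lambda$ if for all $x\in\Sigma^*$, $x\in L\Leftrightarrow p_A(x)>\lambda$, and there is $\delta>0$ with $|p_A(x)-\lambda|\ge\delta$ for all $x$. $\mathbf{LMO}(\Sigma)$ is the class of languages over $\Sigma$ recognized by some MON-1qfa with isolated cut-point. $M(L)$ is the syntactic monoid of $L$. $\mathbf{BG}$ is the class of finite block groups: finite monoids in which every $R$-class and every $L$-class contains at most one idempotent. $\mathbf{R}$ is the class of $R$-trivial finite monoids ($xM=yM\Rightarrow x=y$). *)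

theory Defs
  imports "Jordan_Normal_Form.Schur_Decomposition" "HOL-Algebra.Group"
begin

definition mtrace :: "complex mat \<Rightarrow> complex" where
  "mtrace A = (\<Sum>i<dim_row A. A $$ (i, i))"

definition msum :: "nat \<Rightarrow> ('b \<Rightarrow> complex mat) \<Rightarrow> 'b set \<Rightarrow> complex mat" where
  "msum n f S = mat n n (\<lambda>(i, j). \<Sum>r\<in>S. f r $$ (i, j))"

definition hermitian :: "nat \<Rightarrow> complex mat \<Rightarrow> bool" where
  "hermitian n Ob \<longleftrightarrow> Ob \<in> carrier_mat n n \<and> mat_adjoint Ob = Ob"

definition orth_projector :: "nat \<Rightarrow> complex mat \<Rightarrow> bool" where
  "orth_projector n P \<longleftrightarrow> hermitian n P \<and> P * P = P"

definition spectral_decomposition ::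
  "nat \<Rightarrow> complex mat \<Rightarrow> real set \<Rightarrow> (real \<Rightarrow> complex mat) \<Rightarrow> bool" where
  "spectral_decomposition n Ob V P \<longleftrightarrow>
     hermitian n Ob \<and> finite V \<and>
     (\<forall>r\<in>V. orth_projector n (P r) \<and> P r \<noteq> 0\<^sub>m n n) \<and>
     (\<forall>r\<in>V. \<forall>s\<in>V. r \<noteq> s \<longrightarrow> P r * P s = 0\<^sub>m n n) \<and>
     msum n P V = 1\<^sub>m n \<and>
     Ob = msum n (\<lambda>r. complex_of_real r \<cdot>\<^sub>m P r) V"

text \<open>Alphabet symbols of type 'a; the end marker # is represented by None.\<close>
record 'a mon1qfa =
  qdim :: nat
  obs :: "'a option \<Rightarrow> complex mat"
  spec :: "'a option \<Rightarrow> real set"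
  proj :: "'a option \<Rightarrow> real \<Rightarrow> complex mat"
  init :: "complex mat"
  accept :: "real set"

definition wf_mon1qfa :: "'a mon1qfa \<Rightarrow> bool" where
  "wf_mon1qfa A \<longleftrightarrow>
     init A \<in> carrier_mat 1 (qdim A) \<and>
     (\<Sum>j<qdim A. (cmod (init A $$ (0, j)))\<^sup>2) = 1 \<and>
     (\<forall>c. spectral_decomposition (qdim A) (obs A c) (spec A c) (proj A c)) \<and>
     accept A \<subseteq> spec A None"

definition meas_step :: "'a mon1qfa \<Rightarrow> 'a option \<Rightarrow> complex mat \<Rightarrow> complex mat" where
  "meas_step A c \<rho> = msum (qdim A) (\<lambda>r. proj A c r * \<rho> * proj A c r) (spec A c)"

definition init_state :: "'a mon1qfa \<Rightarrow> complex mat" where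
  "init_state A = mat_adjoint (init A) * init A"

fun run_state :: "'a mon1qfa \<Rightarrow> complex mat \<Rightarrow> 'a list \<Rightarrow> complex mat" where
  "run_state A \<rho> [] = \<rho>"
| "run_state A \<rho> (c # x) = run_state A (meas_step A (Some c) \<rho>) x"

definition acc_prob :: "'a mon1qfa \<Rightarrow> 'a list \<Rightarrow> real" where
  "acc_prob A x = Re (\<Sum>r\<in>accept A. mtrace (proj A None r * run_state A (init_state A) x))"

definition recognizes_isolated :: "'a mon1qfa \<Rightarrow> 'a list set \<Rightarrow> bool" where
  "recognizes_isolated A L \<longleftrightarrow>
     (\<exists>lam :: real. (\<forall>x. x \<in> L \<longleftrightarrow> acc_prob A x > lam) \<and>
        (\<exists>\<delta>>0. \<forall>x. \<bar>acc_prob A x - lam\<bar> \<ge> \<delta>))"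

definition LMO :: "('a::finite) list set set" where
  "LMO = {L. \<exists>A :: 'a mon1qfa. wf_mon1qfa A \<and> recognizes_isolated A L}"

definition syn_equiv :: "'a list set \<Rightarrow> 'a list \<Rightarrow> 'a list \<Rightarrow> bool" where
  "syn_equiv L u v \<longleftrightarrow> (\<forall>x y. x @ u @ y \<in> L \<longleftrightarrow> x @ v @ y \<in> L)"

definition syn_class :: "'a list set \<Rightarrow> 'a list \<Rightarrow> 'a list set" where
  "syn_class L u = {v. syn_equiv L u v}"

definition syntactic_monoid :: "'a list set \<Rightarrow> 'a list set monoid" where
  "syntactic_monoid L =
     \<lparr>partial_object.carrier = range (syn_class L),
      monoid.mult = (\<lambda>X Y. syn_class L ((SOME u. u \<in> X) @ (SOME v. v \<in> Y))),
      monoid.one = syn_class L []\<rparr>"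

definition R_equiv :: "('m, 'b) monoid_scheme \<Rightarrow> 'm \<Rightarrow> 'm \<Rightarrow> bool" where
  "R_equiv M x y \<longleftrightarrow> (\<lambda>s. x \<otimes>\<^bsub>M\<^esub> s) ` carrier M = (\<lambda>s. y \<otimes>\<^bsub>M\<^esub> s) ` carrier M"

definition L_equiv :: "('m, 'b) monoid_scheme \<Rightarrow> 'm \<Rightarrow> 'm \<Rightarrow> bool" where
  "L_equiv M x y \<longleftrightarrow> (\<lambda>s. s \<otimes>\<^bsub>M\<^esub> x) ` carrier M = (\<lambda>s. s \<otimes>\<^bsub>M\<^esub> y) ` carrier M"

definition idempotent_el :: "('m, 'b) monoid_scheme \<Rightarrow> 'm \<Rightarrow> bool" where
  "idempotent_el M e \<longleftrightarrow> e \<in> carrier M \<and> e \<otimes>\<^bsub>M\<^esub> e = e"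

definition block_group :: "('m, 'b) monoid_scheme \<Rightarrow> bool" where
  "block_group M \<longleftrightarrow> monoid M \<and> finite (carrier M) \<and>
     (\<forall>e f. idempotent_el M e \<and> idempotent_el M f \<and> R_equiv M e f \<longrightarrow> e = f) \<and>
     (\<forall>e f. idempotent_el M e \<and> idempotent_el M f \<and> L_equiv M e f \<longrightarrow> e = f)"

definition R_trivial :: "('m, 'b) monoid_scheme \<Rightarrow> bool" where
  "R_trivial M \<longleftrightarrow> monoid M \<and> finite (carrier M) \<and>
     (\<forall>x\<in>carrier M. \<forall>y\<in>carrier M. R_equiv M x y \<longrightarrow> x = y)"

end

theory Submission
  imports Defs
begin

declare assoc_mult_mat[simp del]

lemma mult_carrier_nn[simp]: "A \<in> carrier_mat n n \<Longrightarrow> B \<in> carrier_mat n n \<Longrightarrow> A * B \<in> carrier_mat n n"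
  by (rule mult_carrier_mat)

lemma mult_idx:
  assumes "A \<in> carrier_mat n n" "B \<in> carrier_mat n n" "i<n" "j<n"
  shows "(A*B)$$(i,j) = (\<Sum>k<n. A$$(i,k) * B$$(k,j))"
  using assms by (simp add: scalar_prod_def lessThan_atLeast0)

lemma adj_idx:
  assumes "A \<in> carrier_mat n m" "i<m" "j<n"
  shows "mat_adjoint A $$ (i,j) = cnj (A$$(j,i))"
  using assms by (auto simp: mat_adjoint_def mat_of_rows_def conjugate_vec_def)

lemma herm_idx:
  assumes "hermitian n P" "i<n" "j<n"
  shows "P$$(i,j) = cnj (P$$(j,i))"
proof -
  have "P \<in> carrier_mat n n" "mat_adjoint P = P" using assms(1) by (auto simp: hermitian_def)
  then show ?thesis using adj_idx[of P n n i j] assms by metis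
qed

lemma msum_carrier[simp]: "msum n f S \<in> carrier_mat n n"
  by (simp add: msum_def)
lemma msum_dims[simp]: "dim_row (msum n f S) = n" "dim_col (msum n f S) = n"
  by (simp_all add: msum_def)
lemma msum_idx[simp]: "i<n \<Longrightarrow> j<n \<Longrightarrow> msum n f S $$ (i,j) = (\<Sum>r\<in>S. f r $$ (i,j))"
  by (simp add: msum_def)

definition ip :: "nat \<Rightarrow> complex mat \<Rightarrow> complex mat \<Rightarrow> complex" where
  "ip n A B = (\<Sum>i<n. \<Sum>j<n. cnj (A$$(i,j)) * B$$(i,j))"
definition NN :: "nat \<Rightarrow> complex mat \<Rightarrow> real" where
  "NN n A = (\<Sum>i<n. \<Sum>j<n. (cmod (A$$(i,j)))\<^sup>2)"

lemma NN_nonneg: "NN n A \<ge> 0"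
  unfolding NN_def by (intro sum_nonneg) auto

lemma entry_le: assumes "i<n" "j<n" shows "(cmod (A$$(i,j)))\<^sup>2 \<le> NN n A"
proof -
  have "(cmod (A$$(i,j)))\<^sup>2 \<le> (\<Sum>j<n. (cmod (A$$(i,j)))\<^sup>2)"
    using assms by (intro member_le_sum) auto
  also have "\<dots> \<le> NN n A" unfolding NN_def
    using assms by (intro member_le_sum[where f="\<lambda>i. \<Sum>j<n. (cmod (A$$(i,j)))\<^sup>2"] sum_nonneg) auto
  finally show ?thesis .
qed

lemma entry_le_sqrt: assumes "i<n" "j<n" shows "cmod (A$$(i,j)) \<le> sqrt (NN n A)"
  using entry_le[OF assms, of A] by (metis norm_ge_zero real_le_rsqrt)

lemma cmod_sum_sq: "(cmod (y+z))\<^sup>2 = (cmod y)\<^sup>2 + (cmod z)\<^sup>2 + 2 * Re (cnj y * z)"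
  by (simp add: cmod_power2 power2_sum algebra_simps)

lemma NN_split:
  assumes "\<forall>i<n. \<forall>j<n. X$$(i,j) = Y$$(i,j) + Z$$(i,j)"
  shows "NN n X = NN n Y + NN n Z + 2 * Re (ip n Y Z)"
  using assms unfolding NN_def ip_def
  by (simp add: cmod_sum_sq sum.distrib sum_distrib_left Re_sum)

lemma cmod_tri2: "(cmod (x - z))\<^sup>2 \<le> 2*(cmod (x - y))\<^sup>2 + 2*(cmod (y - z))\<^sup>2"
proof -
  have "cmod (x - z) \<le> cmod (x-y) + cmod (y-z)" by (metis norm_triangle_ineq diff_add_cancel add_diff_eq)
  hence "(cmod (x - z))\<^sup>2 \<le> (cmod (x-y) + cmod (y-z))\<^sup>2" by (simp add: power_mono)
  also have "\<dots> \<le> 2*(cmod (x - y))\<^sup>2 + 2*(cmod (y - z))\<^sup>2"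
    by (simp add: power2_sum) (smt (verit) sum_squares_bound)
  finally show ?thesis .
qed

lemma NN_tri2:
  assumes "X \<in> carrier_mat n n" "Y \<in> carrier_mat n n" "Z \<in> carrier_mat n n"
  shows "NN n (X - Z) \<le> 2 * NN n (X - Y) + 2 * NN n (Y - Z)"
proof -
  have "NN n (X - Z) = (\<Sum>i<n. \<Sum>j<n. (cmod (X$$(i,j) - Z$$(i,j)))\<^sup>2)"
    unfolding NN_def using assms by (intro sum.cong refl) auto
  also have "\<dots> \<le> (\<Sum>i<n. \<Sum>j<n. 2*(cmod (X$$(i,j) - Y$$(i,j)))\<^sup>2 + 2*(cmod (Y$$(i,j) - Z$$(i,j)))\<^sup>2)"
    by (intro sum_mono cmod_tri2)
  also have "\<dots> = 2 * NN n (X - Y) + 2 * NN n (Y - Z)"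
    unfolding NN_def using assms by (simp add: sum.distrib sum_distrib_left)
  finally show ?thesis .
qed

lemma NN_swap:
  assumes "X \<in> carrier_mat n n" "Y \<in> carrier_mat n n"
  shows "NN n (X - Y) = NN n (Y - X)"
  unfolding NN_def using assms by (intro sum.cong refl) (auto simp: norm_minus_commute)

lemma ip_minus2:
  assumes "B \<in> carrier_mat n n" "C \<in> carrier_mat n n"
  shows "ip n A (B - C) = ip n A B - ip n A C"
  unfolding ip_def using assms by (simp add: sum_subtractf right_diff_distrib)

lemma ip_bound:
  "cmod (ip n A B) \<le> (\<Sum>i<n. \<Sum>j<n. cmod (A$$(i,j))) * sqrt (NN n B)"
proof -
  have "cmod (ip n A B) \<le> (\<Sum>i<n. \<Sum>j<n. cmod (A$$(i,j)) * cmod (B$$(i,j)))"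
    unfolding ip_def by (rule order_trans[OF norm_sum sum_mono], rule order_trans[OF norm_sum sum_mono])
       (simp add: norm_mult)
  also have "\<dots> \<le> (\<Sum>i<n. \<Sum>j<n. cmod (A$$(i,j)) * sqrt (NN n B))"
    by (intro sum_mono mult_left_mono entry_le_sqrt) auto
  finally show ?thesis by (simp add: sum_distrib_right)
qed

lemma ip_bound2:
  "cmod (ip n A B) \<le> sqrt (NN n A) * (\<Sum>i<n. \<Sum>j<n. cmod (B$$(i,j)))"
proof -
  have "cmod (ip n A B) \<le> (\<Sum>i<n. \<Sum>j<n. cmod (A$$(i,j)) * cmod (B$$(i,j)))"
    unfolding ip_def by (rule order_trans[OF norm_sum sum_mono], rule order_trans[OF norm_sum sum_mono])
       (simp add: norm_mult)
  also have "\<dots> \<le> (\<Sum>i<n. \<Sum>j<n. sqrt (NN n A) * cmod (B$$(i,j)))"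
    by (intro sum_mono mult_right_mono entry_le_sqrt) auto
  finally show ?thesis by (simp add: sum_distrib_left)
qed


lemma triple_idx:
  assumes "P \<in> carrier_mat n n" "X \<in> carrier_mat n n" "Q \<in> carrier_mat n n" "i<n" "j<n"
  shows "(P*X*Q)$$(i,j) = (\<Sum>k<n. \<Sum>l<n. P$$(i,k) * X$$(k,l) * Q$$(l,j))"
proof -
  have "(P*X*Q)$$(i,j) = (\<Sum>l<n. (P*X)$$(i,l) * Q$$(l,j))"
    using assms by (intro mult_idx) auto
  also have "\<dots> = (\<Sum>l<n. \<Sum>k<n. P$$(i,k) * X$$(k,l) * Q$$(l,j))"
  proof (intro sum.cong refl)
    fix l assume "l \<in> {..<n}"
    hence "(P*X)$$(i,l) = (\<Sum>k<n. P$$(i,k) * X$$(k,l))" using assms by (intro mult_idx) auto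
    thus "(P*X)$$(i,l) * Q$$(l,j) = (\<Sum>k<n. P$$(i,k) * X$$(k,l) * Q$$(l,j))"
      by (simp add: sum_distrib_right)
  qed
  also have "\<dots> = (\<Sum>k<n. \<Sum>l<n. P$$(i,k) * X$$(k,l) * Q$$(l,j))"
    by (rule sum.swap)
  finally show ?thesis .
qed

lemma sum4_swap:
  "(\<Sum>i\<in>I. \<Sum>j\<in>J. \<Sum>k\<in>K. \<Sum>l\<in>M. f i j k l) = (\<Sum>k\<in>K. \<Sum>l\<in>M. \<Sum>i\<in>I. \<Sum>j\<in>J. f i j k l)"
proof -
  have 1: "\<And>i. (\<Sum>j\<in>J. \<Sum>k\<in>K. \<Sum>l\<in>M. f i j k l) = (\<Sum>k\<in>K. \<Sum>j\<in>J. \<Sum>l\<in>M. f i j k l)"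
    by (rule sum.swap)
  have 2: "(\<Sum>i\<in>I. \<Sum>k\<in>K. \<Sum>j\<in>J. \<Sum>l\<in>M. f i j k l) = (\<Sum>k\<in>K. \<Sum>i\<in>I. \<Sum>j\<in>J. \<Sum>l\<in>M. f i j k l)"
    by (rule sum.swap)
  have 3: "\<And>k i. (\<Sum>j\<in>J. \<Sum>l\<in>M. f i j k l) = (\<Sum>l\<in>M. \<Sum>j\<in>J. f i j k l)"
    by (rule sum.swap)
  have 4: "\<And>k. (\<Sum>i\<in>I. \<Sum>l\<in>M. \<Sum>j\<in>J. f i j k l) = (\<Sum>l\<in>M. \<Sum>i\<in>I. \<Sum>j\<in>J. f i j k l)"
    by (rule sum.swap)
  have "(\<Sum>i\<in>I. \<Sum>j\<in>J. \<Sum>k\<in>K. \<Sum>l\<in>M. f i j k l) = (\<Sum>i\<in>I. \<Sum>k\<in>K. \<Sum>j\<in>J. \<Sum>l\<in>M. f i j k l)"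
    by (simp only: 1)
  also have "\<dots> = (\<Sum>k\<in>K. \<Sum>i\<in>I. \<Sum>j\<in>J. \<Sum>l\<in>M. f i j k l)" by (rule 2)
  also have "\<dots> = (\<Sum>k\<in>K. \<Sum>i\<in>I. \<Sum>l\<in>M. \<Sum>j\<in>J. f i j k l)" by (simp only: 3)
  also have "\<dots> = (\<Sum>k\<in>K. \<Sum>l\<in>M. \<Sum>i\<in>I. \<Sum>j\<in>J. f i j k l)" by (simp only: 4)
  finally show ?thesis .
qed

lemma core:
  fixes p b x :: "nat \<Rightarrow> nat \<Rightarrow> complex"
  assumes h: "\<And>i k. i<n \<Longrightarrow> k<n \<Longrightarrow> p i k = cnj (p k i)"
  shows "(\<Sum>i<n. \<Sum>j<n. cnj (b i j) * (\<Sum>k<n. \<Sum>l<n. p i k * x k l * p l j)) =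
         (\<Sum>k<n. \<Sum>l<n. cnj (\<Sum>i<n. \<Sum>j<n. p k i * b i j * p j l) * x k l)"
proof -
  have "(\<Sum>i<n. \<Sum>j<n. cnj (b i j) * (\<Sum>k<n. \<Sum>l<n. p i k * x k l * p l j)) =
        (\<Sum>i<n. \<Sum>j<n. \<Sum>k<n. \<Sum>l<n. cnj (b i j) * (p i k * x k l * p l j))"
    by (simp only: sum_distrib_left)
  also have "\<dots> = (\<Sum>k<n. \<Sum>l<n. \<Sum>i<n. \<Sum>j<n. cnj (b i j) * (p i k * x k l * p l j))"
    by (rule sum4_swap)
  also have "\<dots> = (\<Sum>k<n. \<Sum>l<n. \<Sum>i<n. \<Sum>j<n. cnj (p k i * b i j * p j l) * x k l)"
  proof (rule sum.cong[OF refl], rule sum.cong[OF refl], rule sum.cong[OF refl], rule sum.cong[OF refl])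
    fix k l i j assume "k \<in> {..<n}" "l \<in> {..<n}" "i \<in> {..<n}" "j \<in> {..<n}"
    hence "p i k = cnj (p k i)" "p l j = cnj (p j l)" using h[of i k] h[of l j] by simp_all
    thus "cnj (b i j) * (p i k * x k l * p l j) = cnj (p k i * b i j * p j l) * x k l"
      by (simp add: mult_ac)
  qed
  also have "\<dots> = (\<Sum>k<n. \<Sum>l<n. cnj (\<Sum>i<n. \<Sum>j<n. p k i * b i j * p j l) * x k l)"
    by (simp only: cnj_sum sum_distrib_right)
  finally show ?thesis .
qed

lemma assoc5:
  assumes "A \<in> carrier_mat n n" "B \<in> carrier_mat n n" "C \<in> carrier_mat n n" "D \<in> carrier_mat n n" "E \<in> carrier_mat n n"
  shows "A * (B * C * D) * E = (A * B) * C * (D * E)"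
  using assms by (simp add: assoc_mult_mat[of _ n n _ n _ n])

lemma ip_PXP:
  assumes "hermitian n P" "B \<in> carrier_mat n n" "X \<in> carrier_mat n n"
  shows "ip n B (P*X*P) = ip n (P*B*P) X"
proof -
  have Pc: "P \<in> carrier_mat n n" using assms(1) by (simp add: hermitian_def)
  have "ip n B (P*X*P) = (\<Sum>i<n. \<Sum>j<n. cnj (B$$(i,j)) * (\<Sum>k<n. \<Sum>l<n. P$$(i,k) * X$$(k,l) * P$$(l,j)))"
    unfolding ip_def by (intro sum.cong refl) (simp only: lessThan_iff triple_idx[OF Pc assms(3) Pc])
  also have "\<dots> = (\<Sum>k<n. \<Sum>l<n. cnj (\<Sum>i<n. \<Sum>j<n. P$$(k,i) * B$$(i,j) * P$$(j,l)) * X$$(k,l))"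
    by (rule core[where p="\<lambda>i k. P$$(i,k)"]) (rule herm_idx[OF assms(1)])
  also have "\<dots> = ip n (P*B*P) X"
    unfolding ip_def by (intro sum.cong refl) (simp only: lessThan_iff triple_idx[OF Pc assms(2) Pc])
  finally show ?thesis .
qed

lemma ip_msum2: "ip n B (msum n f S) = (\<Sum>r\<in>S. ip n B (f r))"
proof -
  have "ip n B (msum n f S) = (\<Sum>i<n. \<Sum>j<n. \<Sum>r\<in>S. cnj (B$$(i,j)) * f r $$ (i,j))"
    unfolding ip_def by (simp add: sum_distrib_left)
  also have "\<dots> = (\<Sum>i<n. \<Sum>r\<in>S. \<Sum>j<n. cnj (B$$(i,j)) * f r $$ (i,j))"
    by (intro sum.cong refl) (rule sum.swap)
  also have "\<dots> = (\<Sum>r\<in>S. \<Sum>i<n. \<Sum>j<n. cnj (B$$(i,j)) * f r $$ (i,j))"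
    by (rule sum.swap)
  finally show ?thesis unfolding ip_def .
qed

lemma ip_msum1: "ip n (msum n f S) X = (\<Sum>r\<in>S. ip n (f r) X)"
proof -
  have "ip n (msum n f S) X = (\<Sum>i<n. \<Sum>j<n. \<Sum>r\<in>S. cnj (f r $$ (i,j)) * X$$(i,j))"
    unfolding ip_def by (simp add: sum_distrib_right)
  also have "\<dots> = (\<Sum>i<n. \<Sum>r\<in>S. \<Sum>j<n. cnj (f r $$ (i,j)) * X$$(i,j))"
    by (intro sum.cong refl) (rule sum.swap)
  also have "\<dots> = (\<Sum>r\<in>S. \<Sum>i<n. \<Sum>j<n. cnj (f r $$ (i,j)) * X$$(i,j))"
    by (rule sum.swap)
  finally show ?thesis unfolding ip_def .
qed

lemma msum_single:
  assumes "finite S" "r \<in> S" "g r \<in> carrier_mat n n" "\<And>s. s \<in> S \<Longrightarrow> s \<noteq> r \<Longrightarrow> g s = 0\<^sub>m n n"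
  shows "msum n g S = g r"
proof (rule eq_matI)
  fix i j assume "i < dim_row (g r)" "j < dim_col (g r)"
  hence ij: "i<n" "j<n" using assms(3) by auto
  have "msum n g S $$ (i,j) = g r $$ (i,j) + (\<Sum>s\<in>S-{r}. g s $$ (i,j))"
    using ij assms(1,2) by (simp add: sum.remove)
  also have "(\<Sum>s\<in>S-{r}. g s $$ (i,j)) = 0" using assms(4) ij by (intro sum.neutral) auto
  finally show "msum n g S $$ (i,j) = g r $$ (i,j)" by simp
qed (use assms in auto)

lemma msum_cong: "(\<And>r. r \<in> S \<Longrightarrow> f r = g r) \<Longrightarrow> msum n f S = msum n g S"
  unfolding msum_def by (intro cong_mat refl) (simp add: case_prod_beta)

lemma msum_minus:
  assumes "\<And>r. r\<in>S \<Longrightarrow> F r \<in> carrier_mat n n" "\<And>r. r\<in>S \<Longrightarrow> G r \<in> carrier_mat n n"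
  shows "msum n (\<lambda>r. F r - G r) S = msum n F S - msum n G S"
proof (rule eq_matI)
  fix i j assume "i < dim_row (msum n F S - msum n G S)" "j < dim_col (msum n F S - msum n G S)"
  hence ij: "i<n" "j<n" by auto
  have "(\<Sum>r\<in>S. (F r - G r) $$ (i,j)) = (\<Sum>r\<in>S. F r $$ (i,j) - G r $$ (i,j))"
  proof (intro sum.cong refl)
    fix r assume "r \<in> S"
    hence "F r \<in> carrier_mat n n" "G r \<in> carrier_mat n n" using assms by auto
    thus "(F r - G r) $$ (i,j) = F r $$ (i,j) - G r $$ (i,j)" using ij by simp
  qed
  thus "msum n (\<lambda>r. F r - G r) S $$ (i,j) = (msum n F S - msum n G S) $$ (i,j)"
    using ij by (simp add: sum_subtractf)
qed auto

locale sd =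
  fixes n :: nat and V :: "real set" and P :: "real \<Rightarrow> complex mat"
  assumes fin: "finite V"
    and herm: "r \<in> V \<Longrightarrow> hermitian n (P r)"
    and idem: "r \<in> V \<Longrightarrow> P r * P r = P r"
    and orth: "r \<in> V \<Longrightarrow> s \<in> V \<Longrightarrow> r \<noteq> s \<Longrightarrow> P r * P s = 0\<^sub>m n n"
begin

lemma carr: "r \<in> V \<Longrightarrow> P r \<in> carrier_mat n n"
  using herm by (simp add: hermitian_def)

definition EE :: "complex mat \<Rightarrow> complex mat" where
  "EE X = msum n (\<lambda>r. P r * X * P r) V"

lemma EE_carrier[simp]: "EE X \<in> carrier_mat n n"
  by (simp add: EE_def)
lemma EE_dims[simp]: "dim_row (EE X) = n" "dim_col (EE X) = n"
  by (simp_all add: EE_def)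

lemma ip_EE: assumes "B \<in> carrier_mat n n" "X \<in> carrier_mat n n"
  shows "ip n B (EE X) = ip n (EE B) X"
  unfolding EE_def ip_msum1 ip_msum2 using assms herm by (intro sum.cong refl ip_PXP) auto

lemma sandwich_msum:
  assumes "Q \<in> carrier_mat n n" "R \<in> carrier_mat n n" "\<And>s. s\<in>S \<Longrightarrow> f s \<in> carrier_mat n n"
  shows "Q * msum n f S * R = msum n (\<lambda>s. Q * f s * R) S"
proof (rule eq_matI)
  fix i j assume "i < dim_row (msum n (\<lambda>s. Q * f s * R) S)" "j < dim_col (msum n (\<lambda>s. Q * f s * R) S)"
  hence ij: "i<n" "j<n" by auto
  have "(Q * msum n f S * R) $$ (i,j) = (\<Sum>k<n. \<Sum>l<n. Q$$(i,k) * msum n f S $$(k,l) * R$$(l,j))"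
    by (rule triple_idx[OF assms(1) msum_carrier assms(2) ij])
  also have "\<dots> = (\<Sum>k<n. \<Sum>l<n. Q$$(i,k) * (\<Sum>s\<in>S. f s $$(k,l)) * R$$(l,j))"
    by (intro sum.cong refl) simp
  also have "\<dots> = (\<Sum>k<n. \<Sum>l<n. \<Sum>s\<in>S. Q$$(i,k) * f s $$(k,l) * R$$(l,j))"
    by (simp add: sum_distrib_left sum_distrib_right)
  also have "\<dots> = (\<Sum>k<n. \<Sum>s\<in>S. \<Sum>l<n. Q$$(i,k) * f s $$(k,l) * R$$(l,j))"
    by (intro sum.cong refl) (rule sum.swap)
  also have "\<dots> = (\<Sum>s\<in>S. \<Sum>k<n. \<Sum>l<n. Q$$(i,k) * f s $$(k,l) * R$$(l,j))"
    by (rule sum.swap)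
  also have "\<dots> = msum n (\<lambda>s. Q * f s * R) S $$ (i,j)"
    unfolding msum_idx[OF ij] 
    by (intro sum.cong refl) (rule triple_idx[OF assms(1) assms(3) assms(2) ij, symmetric])
  finally show "(Q * msum n f S * R) $$ (i,j) = msum n (\<lambda>s. Q * f s * R) S $$ (i,j)" .
qed (use assms in auto)

lemma EE_idem: assumes "X \<in> carrier_mat n n" shows "EE (EE X) = EE X"
proof -
  have "EE (EE X) = msum n (\<lambda>r. msum n (\<lambda>s. P r * (P s * X * P s) * P r) V) V"
    unfolding EE_def using assms carr by (intro msum_cong sandwich_msum) auto
  also have "\<dots> = msum n (\<lambda>r. P r * X * P r) V"
  proof (intro msum_cong)
    fix r assume r: "r \<in> V"
    have "P r * (P r * X * P r) * P r = (P r * P r) * X * (P r * P r)"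
      using carr[OF r] assms by (intro assoc5) auto
    hence e: "P r * (P r * X * P r) * P r = P r * X * P r" using idem[OF r] by simp
    have "msum n (\<lambda>s. P r * (P s * X * P s) * P r) V = P r * (P r * X * P r) * P r"
    proof (rule msum_single[OF fin r])
      show "P r * (P r * X * P r) * P r \<in> carrier_mat n n" using carr[OF r] assms by auto
    next
      fix s assume s: "s \<in> V" "s \<noteq> r"
      have "P r * (P s * X * P s) * P r = (P r * P s) * X * (P s * P r)"
        using carr[OF r] carr[OF s(1)] assms by (intro assoc5) auto
      also have "\<dots> = 0\<^sub>m n n" using orth[OF r s(1)] orth[OF s(1) r] s(2) assms by simp
      finally show "P r * (P s * X * P s) * P r = 0\<^sub>m n n" .
    qed
    thus "msum n (\<lambda>s. P r * (P s * X * P s) * P r) V = P r * X * P r" using e by simp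
  qed
  finally show ?thesis unfolding EE_def .
qed

lemma EE_minus: assumes "X \<in> carrier_mat n n" "Y \<in> carrier_mat n n"
  shows "EE (X - Y) = EE X - EE Y"
proof -
  have "EE (X - Y) = msum n (\<lambda>r. P r * X * P r - P r * Y * P r) V"
    unfolding EE_def using assms carr
  proof (intro msum_cong)
    fix r assume "r \<in> V"
    hence Pr: "P r \<in> carrier_mat n n" by (rule carr)
    have "P r * (X - Y) = P r * X - P r * Y" using Pr assms by (rule mult_minus_distrib_mat)
    moreover have "(P r * X - P r * Y) * P r = P r * X * P r - P r * Y * P r"
      using Pr assms by (intro minus_mult_distrib_mat) auto
    ultimately show "P r * (X - Y) * P r = P r * X * P r - P r * Y * P r" by simp
  qed
  also have "\<dots> = EE X - EE Y" unfolding EE_def using assms carr by (intro msum_minus) auto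
  finally show ?thesis .
qed

lemma EE_pyth: assumes "X \<in> carrier_mat n n"
  shows "NN n X = NN n (EE X) + NN n (X - EE X)"
proof -
  have "ip n (EE X) (X - EE X) = ip n (EE X) X - ip n (EE X) (EE X)"
    using assms by (simp add: ip_minus2)
  also have "ip n (EE X) (EE X) = ip n (EE (EE X)) X" using assms by (simp add: ip_EE)
  finally have 0: "ip n (EE X) (X - EE X) = 0" using EE_idem[OF assms] by simp
  have "NN n X = NN n (EE X) + NN n (X - EE X) + 2 * Re (ip n (EE X) (X - EE X))"
    using assms by (intro NN_split) auto
  thus ?thesis using 0 by simp
qed

lemma EE_contr: assumes "X \<in> carrier_mat n n" shows "NN n (EE X) \<le> NN n X"
  using EE_pyth[OF assms] NN_nonneg[of n "X - EE X"] by linarith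

end




lemma adj_carrier: "mat_adjoint M \<in> carrier_mat (dim_col M) (dim_row M)"
  unfolding mat_adjoint_def using mat_of_rows_carrier(1)[of "dim_row M" "map conjugate (cols M)"] by simp

lemma mtrace_ip:
  assumes "hermitian n P" "R \<in> carrier_mat n n"
  shows "mtrace (P * R) = ip n P R"
proof -
  have Pc: "P \<in> carrier_mat n n" using assms(1) by (simp add: hermitian_def)
  have "mtrace (P * R) = (\<Sum>i<n. \<Sum>k<n. P$$(i,k) * R$$(k,i))"
  proof -
    have d: "dim_row (P * R) = n" using Pc by simp
    show ?thesis unfolding mtrace_def d
    proof (rule sum.cong[OF refl])
      fix x assume "x \<in> {..<n}"
      hence x: "x < n" by simp
      show "(P * R) $$ (x, x) = (\<Sum>k<n. P$$(x,k) * R$$(k,x))" by (rule mult_idx[OF Pc assms(2) x x])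
    qed
  qed
  also have "\<dots> = (\<Sum>k<n. \<Sum>i<n. P$$(i,k) * R$$(k,i))" by (rule sum.swap)
  also have "\<dots> = ip n P R" unfolding ip_def
  proof (rule sum.cong[OF refl], rule sum.cong[OF refl])
    fix k i assume "k \<in> {..<n}" "i \<in> {..<n}"
    hence "P$$(i,k) = cnj (P$$(k,i))" using herm_idx[OF assms(1), of i k] by simp
    thus "P$$(i,k) * R$$(k,i) = cnj (P$$(k,i)) * R$$(k,i)" by simp
  qed
  finally show ?thesis .
qed

locale qa =
  fixes A :: "'a mon1qfa"
  assumes wf: "wf_mon1qfa A"
begin

abbreviation N where "N \<equiv> qdim A"

lemma sdc: "sd N (spec A c) (proj A c)"
proof -
  have "spectral_decomposition N (obs A c) (spec A c) (proj A c)" using wf by (simp add: wf_mon1qfa_def)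
  thus ?thesis unfolding spectral_decomposition_def orth_projector_def by unfold_locales auto
qed

lemma ms_EE: "meas_step A c X = sd.EE N (spec A c) (proj A c) X"
  by (simp add: meas_step_def sd.EE_def[OF sdc])

lemma ms_carrier[simp]: "meas_step A c X \<in> carrier_mat N N"
  by (simp add: meas_step_def)

lemma ms_minus: "X \<in> carrier_mat N N \<Longrightarrow> Y \<in> carrier_mat N N \<Longrightarrow>
   meas_step A c (X - Y) = meas_step A c X - meas_step A c Y"
  unfolding ms_EE using sd.EE_minus[OF sdc] by blast

lemma ms_pyth: "X \<in> carrier_mat N N \<Longrightarrow> NN N X = NN N (meas_step A c X) + NN N (X - meas_step A c X)"
  unfolding ms_EE using sd.EE_pyth[OF sdc] by blast

lemma ms_contr: "X \<in> carrier_mat N N \<Longrightarrow> NN N (meas_step A c X) \<le> NN N X"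
  unfolding ms_EE using sd.EE_contr[OF sdc] by blast

lemma ip_ms: "B \<in> carrier_mat N N \<Longrightarrow> X \<in> carrier_mat N N \<Longrightarrow>
   ip N B (meas_step A c X) = ip N (meas_step A c B) X"
  unfolding ms_EE using sd.ip_EE[OF sdc] by blast

abbreviation run where "run \<equiv> run_state A"

lemma run_carrier[simp]: "X \<in> carrier_mat N N \<Longrightarrow> run X w \<in> carrier_mat N N"
  by (induction w arbitrary: X) auto

lemma run_append: "run X (u @ v) = run (run X u) v"
  by (induction u arbitrary: X) auto

lemma run_snoc: "run X (u @ [c]) = meas_step A (Some c) (run X u)"
  by (simp add: run_append)

lemma run_minus: "X \<in> carrier_mat N N \<Longrightarrow> Y \<in> carrier_mat N N \<Longrightarrow> run (X - Y) w = run X w - run Y w"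
  by (induction w arbitrary: X Y) (auto simp: ms_minus)

lemma run_contr: "X \<in> carrier_mat N N \<Longrightarrow> NN N (run X w) \<le> NN N X"
proof (induction w arbitrary: X)
  case (Cons c w)
  then show ?case using ms_contr[of X "Some c"] by (simp, meson order_trans ms_carrier)
qed simp

lemma ip_run: "B \<in> carrier_mat N N \<Longrightarrow> X \<in> carrier_mat N N \<Longrightarrow>
   ip N B (run X w) = ip N (run B (rev w)) X"
proof (induction w arbitrary: B X)
  case (Cons c w)
  have "ip N B (run X (c # w)) = ip N B (run (meas_step A (Some c) X) w)" by simp
  also have "\<dots> = ip N (run B (rev w)) (meas_step A (Some c) X)" using Cons by simp
  also have "\<dots> = ip N (meas_step A (Some c) (run B (rev w))) X" using Cons by (simp add: ip_ms)
  also have "\<dots> = ip N (run B (rev (c # w))) X" by (simp add: run_snoc)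
  finally show ?case .
qed simp

definition Q where "Q = msum N (proj A None) (accept A)"
definition rho0 where "rho0 = init_state A"

lemma Q_carrier[simp]: "Q \<in> carrier_mat N N" by (simp add: Q_def)

lemma rho0_carrier[simp]: "rho0 \<in> carrier_mat N N"
proof -
  have i: "init A \<in> carrier_mat 1 N" using wf by (simp add: wf_mon1qfa_def)
  have "mat_adjoint (init A) \<in> carrier_mat N 1" using adj_carrier[of "init A"] i by auto
  thus ?thesis unfolding rho0_def init_state_def using i by (auto intro: mult_carrier_mat)
qed

lemma acc_eq: "acc_prob A x = Re (ip N Q (run rho0 x))"
proof -
  have F: "accept A \<subseteq> spec A None" using wf by (simp add: wf_mon1qfa_def)
  have "(\<Sum>r\<in>accept A. mtrace (proj A None r * run rho0 x)) = (\<Sum>r\<in>accept A. ip N (proj A None r) (run rho0 x))"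
  proof (rule sum.cong[OF refl])
    fix r assume "r \<in> accept A"
    hence "hermitian N (proj A None r)" using F sd.herm[OF sdc] by blast
    thus "mtrace (proj A None r * run rho0 x) = ip N (proj A None r) (run rho0 x)"
      by (intro mtrace_ip) (use run_carrier[OF rho0_carrier] in auto)
  qed
  also have "\<dots> = ip N Q (run rho0 x)" unfolding Q_def ip_msum1 ..
  finally show ?thesis unfolding acc_prob_def rho0_def by simp
qed

lemma acc_alt: "acc_prob A x = Re (ip N (run Q (rev x)) rho0)"
  unfolding acc_eq by (simp add: ip_run)

end

definition pw :: "'b list \<Rightarrow> nat \<Rightarrow> 'b list" where
  "pw W m = concat (replicate m W)"

lemma pw_Suc: "pw W (Suc m) = pw W m @ W"
proof -
  have "replicate (Suc m) W = replicate m W @ [W]" by (simp add: replicate_append_same)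
  thus ?thesis unfolding pw_def by simp
qed

lemma pw_Suc2: "pw W (Suc m) = W @ pw W m"
  unfolding pw_def by simp

lemma rev_pw: "rev (pw W m) = pw (rev W) m"
proof (induction m)
  case 0 thus ?case by (simp add: pw_def)
next
  case (Suc m)
  have "rev (pw W (Suc m)) = rev (pw W m) @ rev W" by (simp add: pw_Suc2)
  also have "\<dots> = pw (rev W) m @ rev W" using Suc.IH by simp
  also have "\<dots> = pw (rev W) (Suc m)" by (simp only: pw_Suc)
  finally show ?case .
qed

lemma minus_carrier_nn[simp]: "X \<in> carrier_mat n n \<Longrightarrow> Y \<in> carrier_mat n n \<Longrightarrow> X - Y \<in> carrier_mat n n"
  by (simp add: minus_carrier_mat)

lemma ip_minus1:
  assumes "B \<in> carrier_mat n n" "C \<in> carrier_mat n n"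
  shows "ip n (B - C) X = ip n B X - ip n C X"
  unfolding ip_def using assms by (simp add: sum_subtractf left_diff_distrib)

lemma NN_self: "X \<in> carrier_mat n n \<Longrightarrow> NN n (X - X) = 0"
  unfolding NN_def by (intro sum.neutral ballI) auto

context qa
begin

lemma defect_letter:
  assumes "z \<in> carrier_mat N N" "c \<in> set w"
  shows "NN N (meas_step A (Some c) z - z) \<le> 10 ^ length w * (NN N z - NN N (run z w))"
  using assms
proof (induction w arbitrary: z)
  case Nil thus ?case by simp
next
  case (Cons d w)
  define z' where "z' = meas_step A (Some d) z"
  have zc: "z \<in> carrier_mat N N" by (rule Cons.prems(1))
  have z'c: "z' \<in> carrier_mat N N" by (simp add: z'_def)
  have pyth: "NN N z = NN N z' + NN N (z - z')" using ms_pyth[OF zc] z'_def by simp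
  have runeq: "run z (d # w) = run z' w" by (simp add: z'_def)
  define a where "a = NN N (z - z')"
  define D' where "D' = NN N z' - NN N (run z' w)"
  define K where "K = (10::real) ^ length w"
  have a0: "0 \<le> a" unfolding a_def by (rule NN_nonneg)
  have D0: "0 \<le> D'" unfolding D'_def using run_contr[OF z'c] by simp
  have K1: "1 \<le> K" unfolding K_def by simp
  have rhs: "10 ^ length (d # w) * (NN N z - NN N (run z (d # w))) = 10 * K * a + 10 * K * D'"
    unfolding runeq K_def a_def D'_def using pyth by (simp add: algebra_simps)
  have Ka: "a \<le> K * a" using K1 a0 by (simp add: mult_le_cancel_right1)
  have KD: "0 \<le> K * D'" using K1 D0 by simp
  show ?case
  proof (cases "c = d")
    case True
    have "NN N (meas_step A (Some c) z - z) = a"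
      unfolding a_def using True z'_def NN_swap[OF z'c zc] by simp
    thus ?thesis unfolding rhs using Ka KD a0 by linarith
  next
    case False
    hence cw: "c \<in> set w" using Cons.prems(2) by simp
    let ?E = "meas_step A (Some c)"
    have IH: "NN N (?E z' - z') \<le> K * D'" using Cons.IH[OF z'c cw] unfolding K_def D'_def .
    have t1: "NN N (?E z - z) \<le> 2 * NN N (?E z - ?E z') + 2 * NN N (?E z' - z)"
      by (rule NN_tri2) (auto simp: zc z'c)
    have t2: "NN N (?E z' - z) \<le> 2 * NN N (?E z' - z') + 2 * NN N (z' - z)"
      by (rule NN_tri2) (auto simp: zc z'c)
    have t3: "NN N (?E z - ?E z') \<le> a"
      unfolding a_def ms_minus[OF zc z'c, symmetric] by (rule ms_contr) (use zc z'c in simp)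
    have t4: "NN N (z' - z) = a" unfolding a_def by (rule NN_swap[OF z'c zc])
    show ?thesis unfolding rhs using t1 t2 t3 t4 IH Ka KD a0 by linarith
  qed
qed

lemma defect_word:
  assumes zc: "z \<in> carrier_mat N N" and sw: "set s \<subseteq> set w"
  shows "NN N (run z s - z) \<le> 4 ^ length s * (10 ^ length w * (NN N z - NN N (run z w)))"
  using sw
proof (induction s rule: rev_induct)
  case Nil
  have "0 \<le> NN N z - NN N (run z w)" using run_contr[OF zc] by simp
  thus ?case using NN_self[OF zc] by simp
next
  case (snoc c s)
  define X where "X = 10 ^ length w * (NN N z - NN N (run z w))"
  define F where "F = (4::real) ^ length s"
  have X0: "0 \<le> X" unfolding X_def using run_contr[OF zc] by simp
  have F1: "1 \<le> F" unfolding F_def by simp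
  have FX: "X \<le> F * X" using F1 X0 by (simp add: mult_le_cancel_right1)
  let ?E = "meas_step A (Some c)"
  define y where "y = run z s"
  have yc: "y \<in> carrier_mat N N" unfolding y_def using zc by simp
  have IH: "NN N (y - z) \<le> F * X" using snoc unfolding y_def F_def X_def by simp
  have cw: "c \<in> set w" using snoc.prems by simp
  have L: "NN N (?E z - z) \<le> X" unfolding X_def by (rule defect_letter[OF zc cw])
  have t1: "NN N (?E y - z) \<le> 2 * NN N (?E y - ?E z) + 2 * NN N (?E z - z)"
    by (rule NN_tri2) (auto simp: zc yc)
  have t2: "NN N (?E y - ?E z) \<le> NN N (y - z)"
    unfolding ms_minus[OF yc zc, symmetric] by (rule ms_contr) (use zc yc in simp)
  have "NN N (run z (s @ [c]) - z) = NN N (?E y - z)" unfolding y_def by (simp add: run_snoc)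
  also have "\<dots> \<le> 4 * F * X" using t1 t2 IH L FX by linarith
  finally show ?case unfolding F_def X_def by (simp add: mult.assoc)
qed

lemma decrease:
  assumes yc: "y \<in> carrier_mat N N" and e: "e > 0"
  shows "\<exists>m. NN N (run y (pw W m)) - NN N (run y (pw W (Suc m))) < e"
proof (rule ccontr)
  assume "\<not> ?thesis"
  hence h: "\<And>m. NN N (run y (pw W m)) - NN N (run y (pw W (Suc m))) \<ge> e" by (simp add: not_less)
  have b: "NN N (run y (pw W m)) \<le> NN N (run y (pw W 0)) - real m * e" for m
  proof (induction m)
    case (Suc m) thus ?case using h[of m] by (simp add: algebra_simps)
  qed simp
  obtain m where m: "NN N (run y (pw W 0)) < real m * e" using reals_Archimedean3[OF e] by blast
  show False using b[of m] m NN_nonneg[of N "run y (pw W m)"] by linarith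
qed

lemma approx:
  assumes yc: "y \<in> carrier_mat N N" and sW: "set s \<subseteq> set W" and e: "e > 0"
  shows "\<exists>m. NN N (run (run y (pw W m)) s - run y (pw W m)) < e"
proof -
  define K where "K = (4::real) ^ length s * 10 ^ length W"
  have K0: "K > 0" unfolding K_def by simp
  obtain m where m: "NN N (run y (pw W m)) - NN N (run y (pw W (Suc m))) < e / K"
    using decrease[OF yc, of "e / K" W] e K0 by auto
  define z where "z = run y (pw W m)"
  have zc: "z \<in> carrier_mat N N" unfolding z_def using yc by simp
  have zW: "run z W = run y (pw W (Suc m))" unfolding z_def by (simp add: pw_Suc run_append)
  have "NN N (run z s - z) \<le> K * (NN N z - NN N (run z W))"
    using defect_word[OF zc sW] unfolding K_def by (simp add: mult.assoc)
  also have "\<dots> < K * (e / K)"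
  proof (rule mult_strict_left_mono[OF _ K0])
    show "NN N z - NN N (run z W) < e / K" using m zW z_def by simp
  qed
  also have "\<dots> = e" using K0 by simp
  finally show ?thesis unfolding z_def by blast
qed

end




section \<open>Syntactic monoid algebra\<close>

lemma syn_refl: "syn_equiv L u u" by (simp add: syn_equiv_def)
lemma syn_sym: "syn_equiv L u v \<Longrightarrow> syn_equiv L v u" by (simp add: syn_equiv_def)
lemma syn_trans: "syn_equiv L u v \<Longrightarrow> syn_equiv L v w \<Longrightarrow> syn_equiv L u w" by (simp add: syn_equiv_def)

lemma syn_class_eq: "syn_class L u = syn_class L v \<longleftrightarrow> syn_equiv L u v"
proof
  assume "syn_class L u = syn_class L v"
  hence "v \<in> syn_class L u" using syn_refl[of L v] by (simp add: syn_class_def)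
  thus "syn_equiv L u v" by (simp add: syn_class_def)
next
  assume h: "syn_equiv L u v"
  show "syn_class L u = syn_class L v" unfolding syn_class_def
    using h syn_sym syn_trans by blast
qed

lemma syn_app: "syn_equiv L u u' \<Longrightarrow> syn_equiv L v v' \<Longrightarrow> syn_equiv L (u @ v) (u' @ v')"
  unfolding syn_equiv_def by (metis append.assoc)

lemma syn_mem: "syn_equiv L u u' \<Longrightarrow> (x @ u @ y \<in> L \<longleftrightarrow> x @ u' @ y \<in> L)"
  unfolding syn_equiv_def by blast

lemma some_cls: "syn_equiv L u (SOME u0. u0 \<in> syn_class L u)"
proof -
  have "u \<in> syn_class L u" by (simp add: syn_class_def syn_refl)
  hence "(SOME u0. u0 \<in> syn_class L u) \<in> syn_class L u" by (rule someI)
  thus ?thesis by (simp add: syn_class_def)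
qed

lemma mult_cls: "syn_class L u \<otimes>\<^bsub>syntactic_monoid L\<^esub> syn_class L v = syn_class L (u @ v)"
proof -
  have "syn_equiv L ((SOME u0. u0 \<in> syn_class L u) @ (SOME v0. v0 \<in> syn_class L v)) (u @ v)"
    by (rule syn_app[OF syn_sym[OF some_cls] syn_sym[OF some_cls]])
  thus ?thesis unfolding syntactic_monoid_def by (simp add: syn_class_eq)
qed

lemma one_cls: "\<one>\<^bsub>syntactic_monoid L\<^esub> = syn_class L []"
  by (simp add: syntactic_monoid_def)

lemma carrier_cls: "carrier (syntactic_monoid L) = range (syn_class L)"
  by (simp add: syntactic_monoid_def)

lemma syn_monoid: "monoid (syntactic_monoid L)"
proof (rule monoidI)
  fix x y assume "x \<in> carrier (syntactic_monoid L)" "y \<in> carrier (syntactic_monoid L)"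
  then obtain u v where "x = syn_class L u" "y = syn_class L v" by (auto simp: carrier_cls)
  thus "x \<otimes>\<^bsub>syntactic_monoid L\<^esub> y \<in> carrier (syntactic_monoid L)" by (simp add: mult_cls carrier_cls)
next
  show "\<one>\<^bsub>syntactic_monoid L\<^esub> \<in> carrier (syntactic_monoid L)" by (simp add: one_cls carrier_cls)
next
  fix x y z assume "x \<in> carrier (syntactic_monoid L)" "y \<in> carrier (syntactic_monoid L)" "z \<in> carrier (syntactic_monoid L)"
  then obtain u v w where "x = syn_class L u" "y = syn_class L v" "z = syn_class L w" by (auto simp: carrier_cls)
  thus "x \<otimes>\<^bsub>syntactic_monoid L\<^esub> y \<otimes>\<^bsub>syntactic_monoid L\<^esub> z = x \<otimes>\<^bsub>syntactic_monoid L\<^esub> (y \<otimes>\<^bsub>syntactic_monoid L\<^esub> z)"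
    by (simp add: mult_cls)
next
  fix x assume "x \<in> carrier (syntactic_monoid L)"
  then obtain u where "x = syn_class L u" by (auto simp: carrier_cls)
  thus "\<one>\<^bsub>syntactic_monoid L\<^esub> \<otimes>\<^bsub>syntactic_monoid L\<^esub> x = x" "x \<otimes>\<^bsub>syntactic_monoid L\<^esub> \<one>\<^bsub>syntactic_monoid L\<^esub> = x"
    by (simp_all add: mult_cls one_cls)
qed

lemma pw_absorb:
  assumes "syn_equiv L (a @ W) a"
  shows "syn_equiv L (a @ pw W m) a"
proof (induction m)
  case 0 thus ?case by (simp add: pw_def syn_refl)
next
  case (Suc m)
  have "syn_equiv L ((a @ W) @ pw W m) (a @ pw W m)" by (rule syn_app[OF assms syn_refl])
  hence "syn_equiv L (a @ pw W (Suc m)) (a @ pw W m)" by (simp add: pw_Suc2)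
  thus ?case using Suc.IH syn_trans by blast
qed

lemma R_trivial_part:
  assumes absR: "\<And>u s W v. set s \<subseteq> set W \<Longrightarrow> \<exists>m. (u @ pw W m @ s @ v \<in> L \<longleftrightarrow> u @ pw W m @ v \<in> L)"
    and x: "x \<in> carrier (syntactic_monoid L)" and y: "y \<in> carrier (syntactic_monoid L)"
    and R: "R_equiv (syntactic_monoid L) x y"
  shows "x = y"
proof -
  let ?M = "syntactic_monoid L"
  obtain a b where ab: "x = syn_class L a" "y = syn_class L b" using x y by (auto simp: carrier_cls)
  have oc: "\<one>\<^bsub>?M\<^esub> \<in> carrier ?M" by (simp add: one_cls carrier_cls)
  have "x \<in> (\<lambda>s. x \<otimes>\<^bsub>?M\<^esub> s) ` carrier ?M"
    using oc ab by (auto simp: mult_cls one_cls intro!: image_eqI[where x="\<one>\<^bsub>?M\<^esub>"])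
  hence "x \<in> (\<lambda>s. y \<otimes>\<^bsub>?M\<^esub> s) ` carrier ?M" using R by (simp add: R_equiv_def)
  then obtain c where c: "syn_equiv L a (b @ c)" using ab by (auto simp: carrier_cls mult_cls syn_class_eq)
  have "y \<in> (\<lambda>s. y \<otimes>\<^bsub>?M\<^esub> s) ` carrier ?M"
    using oc ab by (auto simp: mult_cls one_cls intro!: image_eqI[where x="\<one>\<^bsub>?M\<^esub>"])
  hence "y \<in> (\<lambda>s. x \<otimes>\<^bsub>?M\<^esub> s) ` carrier ?M" using R by (simp add: R_equiv_def)
  then obtain d where d: "syn_equiv L b (a @ d)" using ab by (auto simp: carrier_cls mult_cls syn_class_eq)
  have "syn_equiv L (b @ c) ((a @ d) @ c)" by (rule syn_app[OF d syn_refl])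
  hence "syn_equiv L (a @ (d @ c)) a" using c syn_trans syn_sym by fastforce
  hence pa: "\<And>m. syn_equiv L (a @ pw (d @ c) m) a" by (rule pw_absorb)
  have "syn_equiv L a (a @ d)" unfolding syn_equiv_def
  proof (intro allI)
    fix p q
    obtain m where m: "(p @ a) @ pw (d @ c) m @ d @ q \<in> L \<longleftrightarrow> (p @ a) @ pw (d @ c) m @ q \<in> L"
      using absR[of d "d @ c" "p @ a" q] by auto
    have 1: "p @ (a @ pw (d @ c) m) @ (d @ q) \<in> L \<longleftrightarrow> p @ a @ (d @ q) \<in> L"
      by (rule syn_mem[OF pa])
    have 2: "p @ (a @ pw (d @ c) m) @ q \<in> L \<longleftrightarrow> p @ a @ q \<in> L"
      by (rule syn_mem[OF pa])
    show "p @ a @ q \<in> L \<longleftrightarrow> p @ (a @ d) @ q \<in> L" using m 1 2 by simp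
  qed
  hence "syn_equiv L a b" using d syn_sym syn_trans by blast
  thus ?thesis using ab syn_class_eq by blast
qed

lemma L_part:
  assumes absL: "\<And>u s W v. set s \<subseteq> set W \<Longrightarrow> \<exists>m. (u @ s @ pw W m @ v \<in> L \<longleftrightarrow> u @ pw W m @ v \<in> L)"
    and e: "idempotent_el (syntactic_monoid L) e" and f: "idempotent_el (syntactic_monoid L) f"
    and Lq: "L_equiv (syntactic_monoid L) e f"
  shows "e = f"
proof -
  let ?M = "syntactic_monoid L"
  obtain a b where ab: "e = syn_class L a" "f = syn_class L b"
    using e f by (auto simp: carrier_cls idempotent_el_def)
  have aa: "syn_equiv L (a @ a) a" using e ab by (simp add: idempotent_el_def mult_cls syn_class_eq)
  have bb: "syn_equiv L (b @ b) b" using f ab by (simp add: idempotent_el_def mult_cls syn_class_eq)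
  have oc: "\<one>\<^bsub>?M\<^esub> \<in> carrier ?M" by (simp add: one_cls carrier_cls)
  have "e \<in> (\<lambda>s. s \<otimes>\<^bsub>?M\<^esub> e) ` carrier ?M"
    using oc ab by (auto simp: mult_cls one_cls intro!: image_eqI[where x="\<one>\<^bsub>?M\<^esub>"])
  hence "e \<in> (\<lambda>s. s \<otimes>\<^bsub>?M\<^esub> f) ` carrier ?M" using Lq by (simp add: L_equiv_def)
  then obtain c where c: "syn_equiv L a (c @ b)" using ab by (auto simp: carrier_cls mult_cls syn_class_eq)
  have "f \<in> (\<lambda>s. s \<otimes>\<^bsub>?M\<^esub> f) ` carrier ?M"
    using oc ab by (auto simp: mult_cls one_cls intro!: image_eqI[where x="\<one>\<^bsub>?M\<^esub>"])
  hence "f \<in> (\<lambda>s. s \<otimes>\<^bsub>?M\<^esub> e) ` carrier ?M" using Lq by (simp add: L_equiv_def)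
  then obtain d where d: "syn_equiv L b (d @ a)" using ab by (auto simp: carrier_cls mult_cls syn_class_eq)
  have ab_a: "syn_equiv L (a @ b) a"
  proof -
    have "syn_equiv L (a @ b) ((c @ b) @ b)" by (rule syn_app[OF c syn_refl])
    moreover have "syn_equiv L ((c @ b) @ b) (c @ b)"
      using syn_app[OF syn_refl[of L c] bb] by simp
    ultimately show ?thesis using c syn_trans syn_sym by blast
  qed
  have ba_b: "syn_equiv L (b @ a) b"
  proof -
    have "syn_equiv L (b @ a) ((d @ a) @ a)" by (rule syn_app[OF d syn_refl])
    moreover have "syn_equiv L ((d @ a) @ a) (d @ a)"
      using syn_app[OF syn_refl[of L d] aa] by simp
    ultimately show ?thesis using d syn_trans syn_sym by blast
  qed
  have bW: "syn_equiv L (b @ (a @ b)) b"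
  proof -
    have "syn_equiv L ((b @ a) @ b) (b @ b)" by (rule syn_app[OF ba_b syn_refl])
    thus ?thesis using bb syn_trans by fastforce
  qed
  have pb: "\<And>m. syn_equiv L (b @ pw (a @ b) m) b" by (rule pw_absorb[OF bW])
  have pa: "\<And>m. syn_equiv L (pw (a @ b) (Suc m)) a"
  proof -
    fix m
    have "syn_equiv L (a @ (b @ pw (a @ b) m)) (a @ b)" by (rule syn_app[OF syn_refl pb])
    thus "syn_equiv L (pw (a @ b) (Suc m)) a" using ab_a syn_trans by (fastforce simp: pw_Suc2)
  qed
  have "syn_equiv L b a" unfolding syn_equiv_def
  proof (intro allI)
    fix p q
    obtain m where m: "p @ b @ pw (a @ b) m @ (a @ b) @ q \<in> L \<longleftrightarrow> p @ pw (a @ b) m @ (a @ b) @ q \<in> L"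
      using absL[of b "a @ b" p "(a @ b) @ q"] by auto
    have 1: "p @ (b @ pw (a @ b) (Suc m)) @ q \<in> L \<longleftrightarrow> p @ b @ q \<in> L"
      by (rule syn_mem[OF pb])
    have 2: "p @ pw (a @ b) (Suc m) @ q \<in> L \<longleftrightarrow> p @ a @ q \<in> L"
      by (rule syn_mem[OF pa])
    show "p @ b @ q \<in> L \<longleftrightarrow> p @ a @ q \<in> L" using m 1 2 by (simp add: pw_Suc)
  qed
  thus ?thesis using ab syn_class_eq syn_sym by metis
qed


section \<open>Language recognized with isolated cut-point\<close>

lemma floor_close:
  assumes "\<lfloor>a\<rfloor> = \<lfloor>b\<rfloor>" shows "\<bar>a - b\<bar> < (1::real)"
proof -
  have "of_int \<lfloor>a\<rfloor> \<le> a" "a < of_int \<lfloor>a\<rfloor> + 1" "of_int \<lfloor>b\<rfloor> \<le> b" "b < of_int \<lfloor>b\<rfloor> + 1"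
    by linarith+
  thus ?thesis using assms by linarith
qed

locale qlang = qa A for A :: "'a mon1qfa" +
  fixes L :: "'a list set" and lam \<delta> :: real
  assumes sep: "\<And>x. x \<in> L \<longleftrightarrow> acc_prob A x > lam"
    and dpos: "\<delta> > 0"
    and gap: "\<And>x. \<bar>acc_prob A x - lam\<bar> \<ge> \<delta>"
begin

lemma same_mem:
  assumes "\<bar>acc_prob A x - acc_prob A x'\<bar> < 2 * \<delta>"
  shows "x \<in> L \<longleftrightarrow> x' \<in> L"
  using assms sep[of x] sep[of x'] gap[of x] gap[of x'] by (auto simp: abs_if split: if_splits)

definition CQ where "CQ = (\<Sum>i<N. \<Sum>j<N. cmod (Q$$(i,j)))"
definition Cr where "Cr = (\<Sum>i<N. \<Sum>j<N. cmod (rho0$$(i,j)))"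
definition eta where "eta = (\<delta> / (CQ + Cr + 1))\<^sup>2"

lemma CQ0: "CQ \<ge> 0" unfolding CQ_def by (intro sum_nonneg) auto
lemma Cr0: "Cr \<ge> 0" unfolding Cr_def by (intro sum_nonneg) auto

lemma eta_pos: "eta > 0"
  unfolding eta_def using dpos CQ0 Cr0 by simp

lemma small_bound:
  assumes C: "0 \<le> C" "C \<le> CQ + Cr" and X: "NN N X < eta"
  shows "C * sqrt (NN N X) < \<delta>"
proof -
  define S where "S = CQ + Cr + 1"
  have S0: "S > 0" unfolding S_def using CQ0 Cr0 by simp
  have "sqrt (NN N X) < sqrt eta" using X by (simp add: real_sqrt_less_mono)
  also have "sqrt eta = \<delta> / S" unfolding eta_def S_def using dpos CQ0 Cr0 by simp
  finally have s: "sqrt (NN N X) < \<delta> / S" .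
  have "C * sqrt (NN N X) \<le> C * (\<delta> / S)" by (rule mult_left_mono) (use s C(1) in auto)
  also have "\<dots> < \<delta>"
  proof -
    have "C * \<delta> < S * \<delta>" using C dpos unfolding S_def by simp
    thus ?thesis using S0 by (simp add: field_simps)
  qed
  finally show ?thesis .
qed

lemma close_R:
  assumes "NN N (run rho0 x - run rho0 x') < eta"
  shows "x \<in> L \<longleftrightarrow> x' \<in> L"
proof (rule same_mem)
  let ?D = "run rho0 x - run rho0 x'"
  have "acc_prob A x - acc_prob A x' = Re (ip N Q ?D)"
    unfolding acc_eq by (simp add: ip_minus2)
  hence "\<bar>acc_prob A x - acc_prob A x'\<bar> \<le> cmod (ip N Q ?D)" by (simp add: abs_Re_le_cmod)
  also have "\<dots> \<le> CQ * sqrt (NN N ?D)" unfolding CQ_def by (rule ip_bound)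
  also have "\<dots> < \<delta>" by (rule small_bound[OF CQ0 _ assms]) (use Cr0 in simp)
  finally show "\<bar>acc_prob A x - acc_prob A x'\<bar> < 2 * \<delta>" using dpos by simp
qed

lemma close_L:
  assumes "NN N (run Q (rev x) - run Q (rev x')) < eta"
  shows "x \<in> L \<longleftrightarrow> x' \<in> L"
proof (rule same_mem)
  let ?D = "run Q (rev x) - run Q (rev x')"
  have "acc_prob A x - acc_prob A x' = Re (ip N ?D rho0)"
    unfolding acc_alt by (simp add: ip_minus1)
  hence "\<bar>acc_prob A x - acc_prob A x'\<bar> \<le> cmod (ip N ?D rho0)" by (simp add: abs_Re_le_cmod)
  also have "\<dots> \<le> sqrt (NN N ?D) * Cr" unfolding Cr_def by (rule ip_bound2)
  also have "\<dots> < \<delta>" using small_bound[OF Cr0 _ assms] CQ0 by (simp add: mult.commute)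
  finally show "\<bar>acc_prob A x - acc_prob A x'\<bar> < 2 * \<delta>" using dpos by simp
qed

lemma absorbR:
  assumes "set s \<subseteq> set W"
  shows "\<exists>m. (u @ pw W m @ s @ v \<in> L \<longleftrightarrow> u @ pw W m @ v \<in> L)"
proof -
  define y where "y = run rho0 u"
  have yc: "y \<in> carrier_mat N N" unfolding y_def by simp
  obtain m where m: "NN N (run (run y (pw W m)) s - run y (pw W m)) < eta"
    using approx[OF yc assms eta_pos] by blast
  define z where "z = run y (pw W m)"
  have zc: "z \<in> carrier_mat N N" unfolding z_def using yc by simp
  have e1: "run rho0 (u @ pw W m @ s @ v) = run (run z s) v" unfolding z_def y_def by (simp add: run_append)
  have e2: "run rho0 (u @ pw W m @ v) = run z v" unfolding z_def y_def by (simp add: run_append)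
  have "NN N (run rho0 (u @ pw W m @ s @ v) - run rho0 (u @ pw W m @ v)) = NN N (run (run z s - z) v)"
    unfolding e1 e2 using zc by (simp add: run_minus)
  also have "\<dots> \<le> NN N (run z s - z)" using zc by (simp add: run_contr)
  also have "\<dots> < eta" using m unfolding z_def .
  finally show ?thesis using close_R by blast
qed

lemma absorbL:
  assumes "set s \<subseteq> set W"
  shows "\<exists>m. (u @ s @ pw W m @ v \<in> L \<longleftrightarrow> u @ pw W m @ v \<in> L)"
proof -
  define y where "y = run Q (rev v)"
  have yc: "y \<in> carrier_mat N N" unfolding y_def by simp
  have sW: "set (rev s) \<subseteq> set (rev W)" using assms by simp
  obtain m where m: "NN N (run (run y (pw (rev W) m)) (rev s) - run y (pw (rev W) m)) < eta"
    using approx[OF yc sW eta_pos] by blast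
  define z where "z = run y (pw (rev W) m)"
  have zc: "z \<in> carrier_mat N N" unfolding z_def using yc by simp
  have e1: "run Q (rev (u @ s @ pw W m @ v)) = run (run z (rev s)) (rev u)"
    unfolding z_def y_def by (simp add: run_append rev_pw)
  have e2: "run Q (rev (u @ pw W m @ v)) = run z (rev u)"
    unfolding z_def y_def by (simp add: run_append rev_pw)
  have "NN N (run Q (rev (u @ s @ pw W m @ v)) - run Q (rev (u @ pw W m @ v))) = NN N (run (run z (rev s) - z) (rev u))"
    unfolding e1 e2 using zc by (simp add: run_minus)
  also have "\<dots> \<le> NN N (run z (rev s) - z)" using zc by (simp add: run_contr)
  also have "\<dots> < eta" using m unfolding z_def .
  finally show ?thesis using close_L by blast
qed

end


lemma floor_bound:
  fixes t B :: real
  assumes "\<bar>t\<bar> \<le> B"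
  shows "\<lfloor>t\<rfloor> \<in> {-(\<lceil>B\<rceil>+1)..\<lceil>B\<rceil>+1}"
proof -
  have f1: "real_of_int \<lfloor>t\<rfloor> \<le> t" "t < real_of_int \<lfloor>t\<rfloor> + 1" by linarith+
  have c: "B \<le> real_of_int \<lceil>B\<rceil>" by (rule le_of_int_ceiling)
  have a1: "t \<le> \<bar>t\<bar>" "-t \<le> \<bar>t\<bar>" by simp_all
  have "real_of_int \<lfloor>t\<rfloor> \<le> real_of_int \<lceil>B\<rceil> + 1" using f1 c assms a1 by linarith
  hence "real_of_int \<lfloor>t\<rfloor> \<le> real_of_int (\<lceil>B\<rceil> + 1)" by simp
  hence u: "\<lfloor>t\<rfloor> \<le> \<lceil>B\<rceil> + 1" by (simp only: of_int_le_iff)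
  have "- real_of_int \<lceil>B\<rceil> - 1 \<le> real_of_int \<lfloor>t\<rfloor>" using f1 c assms a1 by linarith
  hence "real_of_int (-(\<lceil>B\<rceil>+1)) \<le> real_of_int \<lfloor>t\<rfloor>" by simp
  hence l: "-(\<lceil>B\<rceil>+1) \<le> \<lfloor>t\<rfloor>" by (simp only: of_int_le_iff)
  show ?thesis using u l by simp
qed

context qlang
begin

definition hh where "hh = sqrt (eta / (2 * ((real N)\<^sup>2 + 1)))"

lemma den_pos: "2 * ((real N)\<^sup>2 + 1) > 0"
proof -
  have "0 < (real N)\<^sup>2 + 1" by (rule add_nonneg_pos) simp_all
  thus ?thesis by simp
qed

lemma hh_pos: "hh > 0"
  unfolding hh_def using eta_pos den_pos by (intro real_sqrt_gt_zero divide_pos_pos)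

lemma hh_sq: "2 * hh\<^sup>2 * (real N)\<^sup>2 < eta"
proof -
  define X where "X = (real N)\<^sup>2"
  have X1: "0 < X + 1" unfolding X_def by (rule add_nonneg_pos) simp_all
  have X0: "0 \<le> X" unfolding X_def by simp
  have "hh\<^sup>2 = eta / (2 * (X + 1))" unfolding hh_def X_def using eta_pos den_pos by simp
  hence "2 * hh\<^sup>2 * X = eta * (X / (X + 1))" using X1 by (simp add: field_simps)
  also have "\<dots> < eta * 1"
    by (rule mult_strict_left_mono[OF _ eta_pos]) (use X1 in simp)
  finally show ?thesis unfolding X_def by simp
qed

definition gq :: "complex mat \<Rightarrow> (nat \<times> nat \<Rightarrow> int \<times> int)" where
  "gq X = restrict (\<lambda>(i,j). (\<lfloor>Re (X$$(i,j)) / hh\<rfloor>, \<lfloor>Im (X$$(i,j)) / hh\<rfloor>)) ({..<N} \<times> {..<N})"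

lemma small_part: assumes "\<lfloor>a / hh\<rfloor> = \<lfloor>b / hh\<rfloor>" shows "(a - b)\<^sup>2 < hh\<^sup>2"
proof -
  have "\<bar>a / hh - b / hh\<bar> < 1" by (rule floor_close[OF assms])
  hence "\<bar>a - b\<bar> / hh < 1" using hh_pos by (simp add: diff_divide_distrib[symmetric])
  hence lt: "\<bar>a - b\<bar> < hh" using hh_pos by (simp add: divide_less_eq)
  have "\<bar>a - b\<bar>\<^sup>2 < hh\<^sup>2" by (rule power_strict_mono[OF lt]) auto
  thus ?thesis by simp
qed

lemma gq_close:
  assumes X: "X \<in> carrier_mat N N" and Y: "Y \<in> carrier_mat N N" and g: "gq X = gq Y"
  shows "NN N (X - Y) < eta"
proof -
  have tm: "(cmod ((X - Y)$$(i,j)))\<^sup>2 \<le> 2 * hh\<^sup>2" if ij: "i \<in> {..<N}" "j \<in> {..<N}" for i j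
  proof -
    have "gq X (i,j) = gq Y (i,j)" using g by simp
    hence fl: "\<lfloor>Re (X$$(i,j)) / hh\<rfloor> = \<lfloor>Re (Y$$(i,j)) / hh\<rfloor>" "\<lfloor>Im (X$$(i,j)) / hh\<rfloor> = \<lfloor>Im (Y$$(i,j)) / hh\<rfloor>"
      using ij by (auto simp: gq_def)
    have "(cmod ((X - Y)$$(i,j)))\<^sup>2 = (Re (X$$(i,j)) - Re (Y$$(i,j)))\<^sup>2 + (Im (X$$(i,j)) - Im (Y$$(i,j)))\<^sup>2"
      using ij X Y by (simp add: cmod_power2)
    thus ?thesis using small_part[OF fl(1)] small_part[OF fl(2)] by linarith
  qed
  have "NN N (X - Y) \<le> (\<Sum>i<N. \<Sum>j<N. 2 * hh\<^sup>2)"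
    unfolding NN_def by (intro sum_mono tm)
  also have "\<dots> = 2 * hh\<^sup>2 * (real N)\<^sup>2" by (simp add: power2_eq_square)
  also have "\<dots> < eta" by (rule hh_sq)
  finally show ?thesis .
qed

lemma gq_sameR:
  assumes "gq (run rho0 u) = gq (run rho0 u')"
  shows "u @ y \<in> L \<longleftrightarrow> u' @ y \<in> L"
proof (rule close_R)
  have c1: "run rho0 u \<in> carrier_mat N N" "run rho0 u' \<in> carrier_mat N N" by simp_all
  have "NN N (run rho0 (u @ y) - run rho0 (u' @ y)) = NN N (run (run rho0 u - run rho0 u') y)"
    using c1 by (simp add: run_append run_minus)
  also have "\<dots> \<le> NN N (run rho0 u - run rho0 u')" using c1 by (simp add: run_contr)
  also have "\<dots> < eta" by (rule gq_close[OF c1 assms])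
  finally show "NN N (run rho0 (u @ y) - run rho0 (u' @ y)) < eta" .
qed

definition GG where "GG = gq ` range (run rho0)"

lemma GG_fin: "finite GG"
proof -
  define B where "B = sqrt (NN N rho0) / hh"
  define K where "K = \<lceil>B\<rceil> + 1"
  have "GG \<subseteq> PiE ({..<N} \<times> {..<N}) (\<lambda>_. {-K..K} \<times> {-K..K})"
  proof
    fix g assume "g \<in> GG"
    then obtain u where g: "g = gq (run rho0 u)" unfolding GG_def by auto
    define X where "X = run rho0 u"
    have Xc: "X \<in> carrier_mat N N" unfolding X_def by simp
    have XN: "sqrt (NN N X) \<le> sqrt (NN N rho0)" unfolding X_def by (simp add: run_contr)
    have bd: "\<bar>Re (X$$(i,j)) / hh\<bar> \<le> B" "\<bar>Im (X$$(i,j)) / hh\<bar> \<le> B" if "i < N" "j < N" for i j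
    proof -
      have c: "cmod (X$$(i,j)) \<le> sqrt (NN N rho0)" using entry_le_sqrt[OF that, of X] XN by linarith
      have "\<bar>Re (X$$(i,j))\<bar> \<le> sqrt (NN N rho0)" using abs_Re_le_cmod c by (rule order_trans)
      thus "\<bar>Re (X$$(i,j)) / hh\<bar> \<le> B" unfolding B_def using hh_pos by (simp add: divide_right_mono)
      have "\<bar>Im (X$$(i,j))\<bar> \<le> sqrt (NN N rho0)" using abs_Im_le_cmod c by (rule order_trans)
      thus "\<bar>Im (X$$(i,j)) / hh\<bar> \<le> B" unfolding B_def using hh_pos by (simp add: divide_right_mono)
    qed
    show "g \<in> PiE ({..<N} \<times> {..<N}) (\<lambda>_. {-K..K} \<times> {-K..K})"
      unfolding g X_def[symmetric] gq_def
      using floor_bound[OF bd(1)] floor_bound[OF bd(2)] by (auto simp: K_def)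
  qed
  moreover have "finite (PiE ({..<N} \<times> {..<N}) (\<lambda>_. {-K..K} \<times> {-K..K}))"
    by (intro finite_PiE) auto
  ultimately show ?thesis by (rule finite_subset)
qed

definition key where "key w = {(gq (run rho0 x), gq (run rho0 (x @ w))) | x. True}"

lemma key_sub: "key w \<subseteq> GG \<times> GG"
  unfolding key_def GG_def by auto

lemma key_eq:
  assumes "key w = key w'"
  shows "syn_equiv L w w'"
  unfolding syn_equiv_def
proof (intro allI)
  fix x y
  have "(gq (run rho0 x), gq (run rho0 (x @ w))) \<in> key w" unfolding key_def by blast
  hence "(gq (run rho0 x), gq (run rho0 (x @ w))) \<in> key w'" using assms by simp
  then obtain x' where "(gq (run rho0 x), gq (run rho0 (x @ w))) = (gq (run rho0 x'), gq (run rho0 (x' @ w')))"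
    unfolding key_def by blast
  hence x': "gq (run rho0 x') = gq (run rho0 x)" "gq (run rho0 (x' @ w')) = gq (run rho0 (x @ w))"
    by simp_all
  have 1: "x @ (w' @ y) \<in> L \<longleftrightarrow> x' @ (w' @ y) \<in> L" by (rule gq_sameR) (use x'(1) in simp)
  have 2: "(x' @ w') @ y \<in> L \<longleftrightarrow> (x @ w) @ y \<in> L" by (rule gq_sameR[OF x'(2)])
  show "x @ w @ y \<in> L \<longleftrightarrow> x @ w' @ y \<in> L" using 1 2 by simp
qed

lemma fin_carrier: "finite (carrier (syntactic_monoid L))"
proof -
  have "range (syn_class L) \<subseteq> (\<lambda>K. syn_class L (SOME w. key w = K)) ` Pow (GG \<times> GG)"
  proof
    fix c assume "c \<in> range (syn_class L)"
    then obtain w where c: "c = syn_class L w" by auto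
    have ex: "\<exists>w'. key w' = key w" by blast
    have "key (SOME w'. key w' = key w) = key w" using someI_ex[OF ex] .
    hence "syn_equiv L (SOME w'. key w' = key w) w" by (rule key_eq)
    hence "syn_class L (SOME w'. key w' = key w) = syn_class L w" by (simp only: syn_class_eq)
    hence "c = syn_class L (SOME w'. key w' = key w)" unfolding c by simp
    moreover have "key w \<in> Pow (GG \<times> GG)" using key_sub by auto
    ultimately show "c \<in> (\<lambda>K. syn_class L (SOME w. key w = K)) ` Pow (GG \<times> GG)" by blast
  qed
  moreover have "finite ((\<lambda>K. syn_class L (SOME w. key w = K)) ` Pow (GG \<times> GG))"
    using GG_fin by simp
  ultimately show ?thesis unfolding carrier_cls by (rule finite_subset)
qed

theorem main: "block_group (syntactic_monoid L) \<and> R_trivial (syntactic_monoid L)"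
proof
  have Rt: "\<And>x y. x \<in> carrier (syntactic_monoid L) \<Longrightarrow> y \<in> carrier (syntactic_monoid L) \<Longrightarrow>
      R_equiv (syntactic_monoid L) x y \<Longrightarrow> x = y"
    by (rule R_trivial_part[OF absorbR])
  show "R_trivial (syntactic_monoid L)"
    unfolding R_trivial_def using syn_monoid fin_carrier Rt by blast
  show "block_group (syntactic_monoid L)"
    unfolding block_group_def
  proof (intro conjI allI impI)
    show "monoid (syntactic_monoid L)" by (rule syn_monoid)
    show "finite (carrier (syntactic_monoid L))" by (rule fin_carrier)
  next
    fix e f assume h: "idempotent_el (syntactic_monoid L) e \<and> idempotent_el (syntactic_monoid L) f \<and> R_equiv (syntactic_monoid L) e f"
    thus "e = f" using Rt unfolding idempotent_el_def by blast
  next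
    fix e f assume h: "idempotent_el (syntactic_monoid L) e \<and> idempotent_el (syntactic_monoid L) f \<and> L_equiv (syntactic_monoid L) e f"
    thus "e = f" using L_part[OF absorbL] by blast
  qed
qed

end

theorem theorem3:
  fixes L :: "('a::finite) list set"
  assumes "L \<in> LMO"
  shows "block_group (syntactic_monoid L) \<and> R_trivial (syntactic_monoid L)"
proof -
  obtain A :: "'a mon1qfa" where A: "wf_mon1qfa A" "recognizes_isolated A L"
    using assms unfolding LMO_def by blast
  then obtain lam \<delta> where sep: "\<forall>x. x \<in> L \<longleftrightarrow> acc_prob A x > lam" and d: "\<delta> > 0"
    and gap: "\<forall>x. \<bar>acc_prob A x - lam\<bar> \<ge> \<delta>"
    unfolding recognizes_isolated_def by blast
  have "qlang A L lam \<delta>"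
  proof (unfold_locales)
    show "wf_mon1qfa A" by (rule A(1))
    show "\<And>x. x \<in> L \<longleftrightarrow> lam < acc_prob A x" using sep by blast
    show "0 < \<delta>" by (rule d)
    show "\<And>x. \<delta> \<le> \<bar>acc_prob A x - lam\<bar>" using gap by blast
  qed
  then interpret qlang A L lam \<delta> .
  show ?thesis by (rule main)
qed


end
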